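(* Let $X$ be a pure simplicial complex, $k\ge0$, $L$ a $k$-dimensional $l$-assignment, and $(\pi_\sigma)_{\sigma\in X(k)}$ any family of permutations of $[l]$. Then $$\mathrm{dist}(L,\mathcal A_l)\le\frac1l\sum_{i=1}^l\mathrm{dist}\big((L^\sigma_{\pi_\sigma(i)})_{\sigma\in X(k)},\mathcal A\big),$$ where $\mathcal A_l$ is the set of agreeing $k$-dimensional $l$-assignments and $\mathcal A$ the set of agreeing $k$-dimensional assignments.
   Context: $X(k)$ = faces with $k+1$ elements; weights $w_X(\sigma)=|\{\tau\in X(d):\sigma\subseteq\tau\}|/(\binom{d+1}{|\sigma|}|X(d)|)$ for $d=\dim X$. A $k$-dimensional assignment is $F=(F^\sigma)_{\sigma\in X(k)}$, $F^\sigma:\sigma\to\{0,1\}$; agreeing if some $g:X(0)\to\{0,1\}$ has $g|_\sigma=F^\sigma$ for all $\sigma$; $\mathrm{dist}(F,F')=\sum_{\sigma:F^\sigma\ne F'^\sigma}w_X(\sigma)$. A $k$-dimensional $l$-assignment is $L=(L^\sigma_i)_{\sigma\in X(k),i\in[l]}$ with $L^\sigma_i:\sigma\to\{0,1\}$; $\mathrm{dist}(L,M)=\sum_\sigma w_X(\sigma)|\{i:L^\sigma_i\neq M^\sigma_i\}|/l$; $L$ is agreeing if there are $g_1,\dots,g_l:X(0)\to\{0,1\}$ and permutations $\rho_\sigma$ of $[l]$ with $L^\sigma_{\rho_\sigma(i)}=g_i|_\sigma$ for all $\sigma,i$. Distance to a set is the minimum. *)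

theory Defs
  imports Complex_Main "HOL-Combinatorics.Permutations"
begin

definition simplicial_complex :: "'v set set \<Rightarrow> bool" where
  "simplicial_complex X \<longleftrightarrow> finite X \<and> X \<noteq> {} \<and> (\<forall>\<sigma>\<in>X. finite \<sigma>)
     \<and> (\<forall>\<sigma>\<in>X. \<forall>\<tau>. \<tau> \<subseteq> \<sigma> \<longrightarrow> \<tau> \<in> X)"

definition faces :: "'v set set \<Rightarrow> nat \<Rightarrow> 'v set set" where
  "faces X k = {\<sigma>\<in>X. card \<sigma> = k + 1}"

definition cdim :: "'v set set \<Rightarrow> nat" where
  "cdim X = Max (card ` X) - 1"

definition pure :: "'v set set \<Rightarrow> bool" where
  "pure X \<longleftrightarrow> (\<forall>\<sigma>\<in>X. \<exists>\<tau>\<in>faces X (cdim X). \<sigma> \<subseteq> \<tau>)"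

definition weight :: "'v set set \<Rightarrow> 'v set \<Rightarrow> real" where
  "weight X \<sigma> = real (card {\<tau>\<in>faces X (cdim X). \<sigma> \<subseteq> \<tau>})
      / (real ((cdim X + 1) choose card \<sigma>) * real (card (faces X (cdim X))))"

text \<open>A k-dimensional assignment: F \<sigma> is a map \<sigma> \<rightarrow> {0,1}; only values on \<sigma> matter.\<close>
definition local_differ :: "'v set \<Rightarrow> ('v \<Rightarrow> bool) \<Rightarrow> ('v \<Rightarrow> bool) \<Rightarrow> bool" where
  "local_differ \<sigma> f g \<longleftrightarrow> (\<exists>v\<in>\<sigma>. f v \<noteq> g v)"

definition agreeing :: "'v set set \<Rightarrow> nat \<Rightarrow> ('v set \<Rightarrow> 'v \<Rightarrow> bool) \<Rightarrow> bool" where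
  "agreeing X k F \<longleftrightarrow> (\<exists>g :: 'v \<Rightarrow> bool. \<forall>\<sigma>\<in>faces X k. \<forall>v\<in>\<sigma>. g v = F \<sigma> v)"

definition adist :: "'v set set \<Rightarrow> nat \<Rightarrow> ('v set \<Rightarrow> 'v \<Rightarrow> bool) \<Rightarrow> ('v set \<Rightarrow> 'v \<Rightarrow> bool) \<Rightarrow> real" where
  "adist X k F F' = (\<Sum>\<sigma>\<in>{\<sigma>\<in>faces X k. local_differ \<sigma> (F \<sigma>) (F' \<sigma>)}. weight X \<sigma>)"

definition adist_agreeing :: "'v set set \<Rightarrow> nat \<Rightarrow> ('v set \<Rightarrow> 'v \<Rightarrow> bool) \<Rightarrow> real" where
  "adist_agreeing X k F = Inf {adist X k F F' | F'. agreeing X k F'}"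

text \<open>A k-dimensional l-assignment: L \<sigma> i for i \<in> [l] = {0..<l}.\<close>
definition agreeing_l :: "'v set set \<Rightarrow> nat \<Rightarrow> nat \<Rightarrow> ('v set \<Rightarrow> nat \<Rightarrow> 'v \<Rightarrow> bool) \<Rightarrow> bool" where
  "agreeing_l X k l L \<longleftrightarrow> (\<exists>(g :: nat \<Rightarrow> 'v \<Rightarrow> bool) (\<rho> :: 'v set \<Rightarrow> nat \<Rightarrow> nat).
      (\<forall>\<sigma>\<in>faces X k. \<rho> \<sigma> permutes {..<l}) \<and>
      (\<forall>\<sigma>\<in>faces X k. \<forall>i<l. \<forall>v\<in>\<sigma>. L \<sigma> (\<rho> \<sigma> i) v = g i v))"

definition ldist :: "'v set set \<Rightarrow> nat \<Rightarrow> nat \<Rightarrow> ('v set \<Rightarrow> nat \<Rightarrow> 'v \<Rightarrow> bool)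
     \<Rightarrow> ('v set \<Rightarrow> nat \<Rightarrow> 'v \<Rightarrow> bool) \<Rightarrow> real" where
  "ldist X k l L M = (\<Sum>\<sigma>\<in>faces X k. weight X \<sigma> *
       real (card {i\<in>{..<l}. local_differ \<sigma> (L \<sigma> i) (M \<sigma> i)}) / real l)"

definition ldist_agreeing :: "'v set set \<Rightarrow> nat \<Rightarrow> nat \<Rightarrow> ('v set \<Rightarrow> nat \<Rightarrow> 'v \<Rightarrow> bool) \<Rightarrow> real" where
  "ldist_agreeing X k l L = Inf {ldist X k l L M | M. agreeing_l X k l M}"

end

theory Submission
  imports Defs
begin

lemma weight_nonneg: "weight X \<sigma> \<ge> 0"
  unfolding weight_def by simp

lemma adist_agreeing_attained:
  assumes fin: "finite (faces X k)"
  shows "\<exists>g. adist X k F (\<lambda>\<sigma>. g) = adist_agreeing X k F"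
proof -
  let ?S = "{adist X k F F' | F'. agreeing X k F'}"
  have sub: "?S \<subseteq> (\<lambda>S. sum (weight X) S) ` Pow (faces X k)"
    unfolding adist_def by auto
  have finS: "finite ?S" using finite_subset[OF sub] fin by auto
  have ne: "?S \<noteq> {}"
    unfolding agreeing_def by (auto intro!: exI[of _ "\<lambda>\<sigma> v. False"])
  have "Inf ?S \<in> ?S" using cInf_eq_Min[OF finS ne] Min_in[OF finS ne] by simp
  then obtain F' where F': "agreeing X k F'" "adist X k F F' = adist_agreeing X k F"
    unfolding adist_agreeing_def by auto
  then obtain g where g: "\<forall>\<sigma>\<in>faces X k. \<forall>v\<in>\<sigma>. g v = F' \<sigma> v" unfolding agreeing_def by auto
  have "adist X k F (\<lambda>\<sigma>. g) = adist X k F F'"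
    unfolding adist_def local_differ_def
    by (rule sum.cong) (use g in auto)
  with F' show ?thesis by auto
qed

lemma card_perm_filter:
  assumes p: "p permutes {..<l}"
  shows "card {j\<in>{..<l}. P j} = card {i\<in>{..<l}. P (p i)}"
proof -
  have "bij_betw p {i\<in>{..<l}. P (p i)} {j\<in>{..<l}. P j}"
  proof -
    have b: "bij_betw p {..<l} {..<l}" using permutes_imp_bij[OF p] .
    show ?thesis unfolding bij_betw_def
    proof
      show "inj_on p {i \<in> {..<l}. P (p i)}"
        using b unfolding bij_betw_def by (auto intro: inj_on_subset)
      show "p ` {i \<in> {..<l}. P (p i)} = {j \<in> {..<l}. P j}"
      proof
        show "p ` {i \<in> {..<l}. P (p i)} \<subseteq> {j \<in> {..<l}. P j}"
          using b unfolding bij_betw_def by auto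
        show "{j \<in> {..<l}. P j} \<subseteq> p ` {i \<in> {..<l}. P (p i)}"
        proof
          fix j assume j: "j \<in> {j \<in> {..<l}. P j}"
          then obtain i where "i \<in> {..<l}" "j = p i" using b unfolding bij_betw_def by auto
          with j show "j \<in> p ` {i \<in> {..<l}. P (p i)}" by auto
        qed
      qed
    qed
  qed
  then show ?thesis by (simp add: bij_betw_same_card)
qed

lemma card_filter_sum:
  fixes l :: nat
  shows   "real (card {i\<in>{..<l}. Q i}) = (\<Sum>i<l. if Q i then 1 else 0)"
proof -
  have f: "finite {..<l}" by simp
  show ?thesis using sum.inter_filter[OF f, of "\<lambda>_. (1::real)" Q] by simp
qed

theorem mainTheorem6:
  fixes X :: "'v set set" and k l :: nat
    and L :: "'v set \<Rightarrow> nat \<Rightarrow> 'v \<Rightarrow> bool"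
    and \<pi> :: "'v set \<Rightarrow> nat \<Rightarrow> nat"
  assumes "simplicial_complex X" and "pure X"
    and "\<forall>\<sigma>\<in>faces X k. \<pi> \<sigma> permutes {..<l}"
  shows "ldist_agreeing X k l L
     \<le> (1 / real l) * (\<Sum>i<l. adist_agreeing X k (\<lambda>\<sigma>. L \<sigma> (\<pi> \<sigma> i)))"
proof -
  have fin: "finite (faces X k)"
    using assms(1) unfolding simplicial_complex_def faces_def by auto
  have "\<forall>i. \<exists>g. adist X k (\<lambda>\<sigma>. L \<sigma> (\<pi> \<sigma> i)) (\<lambda>\<sigma>. g)
              = adist_agreeing X k (\<lambda>\<sigma>. L \<sigma> (\<pi> \<sigma> i))"
    using adist_agreeing_attained[OF fin] by blast
  then obtain G where G: "\<And>i. adist X k (\<lambda>\<sigma>. L \<sigma> (\<pi> \<sigma> i)) (\<lambda>\<sigma>. G i)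
              = adist_agreeing X k (\<lambda>\<sigma>. L \<sigma> (\<pi> \<sigma> i))"
    by metis
  define M where "M = (\<lambda>\<sigma> j. G (inv (\<pi> \<sigma>) j))"
  have Mag: "agreeing_l X k l M"
    unfolding agreeing_l_def
  proof (intro exI[of _ G] exI[of _ \<pi>] conjI ballI allI impI)
    fix \<sigma> i v assume s: "\<sigma> \<in> faces X k" and "i < l" "v \<in> \<sigma>"
    show "M \<sigma> (\<pi> \<sigma> i) v = G i v"
      unfolding M_def using permutes_inverses(2)[OF assms(3)[rule_format, OF s]] by simp
  qed (use assms(3) in auto)
  have bdd: "bdd_below {ldist X k l L M | M. agreeing_l X k l M}"
    unfolding ldist_def
    by (rule bdd_belowI[of _ 0]) (auto intro!: sum_nonneg mult_nonneg_nonneg weight_nonneg divide_nonneg_nonneg)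
  have "ldist_agreeing X k l L \<le> ldist X k l L M"
    unfolding ldist_agreeing_def using Mag by (intro cInf_lower[OF _ bdd]) auto
  also have "ldist X k l L M = (1 / real l) * (\<Sum>i<l. adist X k (\<lambda>\<sigma>. L \<sigma> (\<pi> \<sigma> i)) (\<lambda>\<sigma>. G i))"
  proof -
    have c: "real (card {j\<in>{..<l}. local_differ \<sigma> (L \<sigma> j) (M \<sigma> j)})
        = (\<Sum>i<l. if local_differ \<sigma> (L \<sigma> (\<pi> \<sigma> i)) (G i) then 1 else 0)"
      if s: "\<sigma> \<in> faces X k" for \<sigma>
    proof -
      have p: "\<pi> \<sigma> permutes {..<l}" using assms(3) s by auto
      have "card {j\<in>{..<l}. local_differ \<sigma> (L \<sigma> j) (M \<sigma> j)}
          = card {i\<in>{..<l}. local_differ \<sigma> (L \<sigma> (\<pi> \<sigma> i)) (M \<sigma> (\<pi> \<sigma> i))}"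
        by (rule card_perm_filter[OF p])
      also have "M \<sigma> (\<pi> \<sigma> i) = G i" for i
        unfolding M_def using permutes_inverses(2)[OF p] by simp
      ultimately show ?thesis using card_filter_sum[of l "\<lambda>i. local_differ \<sigma> (L \<sigma> (\<pi> \<sigma> i)) (G i)"] by simp
    qed
    have "ldist X k l L M = (\<Sum>\<sigma>\<in>faces X k. (1 / real l) * (\<Sum>i<l. weight X \<sigma> *
        (if local_differ \<sigma> (L \<sigma> (\<pi> \<sigma> i)) (G i) then 1 else 0)))"
      unfolding ldist_def
    proof (rule sum.cong)
      fix \<sigma> assume s: "\<sigma> \<in> faces X k"
      show "weight X \<sigma> * real (card {i \<in> {..<l}. local_differ \<sigma> (L \<sigma> i) (M \<sigma> i)}) / real l =
         1 / real l * (\<Sum>i<l. weight X \<sigma> * (if local_differ \<sigma> (L \<sigma> (\<pi> \<sigma> i)) (G i) then 1 else 0))"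
        unfolding c[OF s] by (simp add: sum_distrib_left sum_divide_distrib)
    qed simp
    also have "\<dots> = (1 / real l) * (\<Sum>i<l. \<Sum>\<sigma>\<in>faces X k. weight X \<sigma> *
        (if local_differ \<sigma> (L \<sigma> (\<pi> \<sigma> i)) (G i) then 1 else 0))"
      by (simp add: sum_distrib_left[symmetric] sum.swap[of _ "faces X k"] sum_divide_distrib)
    also have "\<dots> = (1 / real l) * (\<Sum>i<l. adist X k (\<lambda>\<sigma>. L \<sigma> (\<pi> \<sigma> i)) (\<lambda>\<sigma>. G i))"
      unfolding adist_def by (simp add: sum.inter_filter[OF fin, symmetric] if_distrib cong: if_cong)
    finally show ?thesis .
  qed
  also have "\<dots> = (1 / real l) * (\<Sum>i<l. adist_agreeing X k (\<lambda>\<sigma>. L \<sigma> (\<pi> \<sigma> i)))"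
    using G by simp
  finally show ?thesis .
qed

end
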